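(* Let $\mathcal{D}$ and $\mathcal{X}$ be finite sets, $\mathcal{Y}=\{0,1\}$, and let $p_{D,X,Y}$ be a given joint probability mass function on $\mathcal{D}\times\mathcal{X}\times\mathcal{Y}$ (with its marginals and conditionals, e.g. $p_{X,Y}$, $p_{X,Y|D}$, regarded as given). Let $p_{Y_T}$ be a given target distribution on $\mathcal{Y}$, let $\delta:(\mathcal{X}\times\mathcal{Y})^2\to\mathbb{R}_+$ be a distortion function with $\delta((x,y),(x,y))=0$, let $\epsilon_{y,d}$, $\epsilon_{y,d_1,d_2}$, $c_{d,x,y}$ be given thresholds, let $\Delta(\cdot,\cdot)$ be a dissimilarity measure between probability distributions on $\mathcal{X}\times\mathcal{Y}$, and let $J(\cdot,\cdot)$ be a distance function between real numbers (probabilities). Consider the optimization problem over the conditional distribution (randomized mapping) $p_{\hat X,\hat Y|X,Y,D}$ from $\mathcal{D}\times\mathcal{X}\times\mathcal{Y}$ to $\mathcal{X}\times\mathcal{Y}$: \[ \min_{p_{\hat X,\hat Y|X,Y,D}} \Delta\big(p_{\hat X,\hat Y},p_{X,Y}\big) \] subject to (i) $J\big(p_{\hat Y|D}(y|d),p_{Y_T}(y)\big)\le \epsilon_{y,d}$ for all $d\in\mathcal{D}$, $y\in\{0,1\}$; (ii) $\sum_{\hat x,\hat y} p_{\hat X,\hat Y|D,X,Y}(\hat x,\hat y|d,x,y)\,\delta((x,y),(\hat x,\hat y))\le c_{d,x,y}$ for all $(d,x,y)\in\mathcal{D}\times\mathcal{X}\times\mathcal{Y}$; (iii) $p_{\hat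 X,\hat Y|X,Y,D}$ is a valid conditional probability distribution. Here $p_{\hat X,\hat Y}(\hat x,\hat y)=\sum_{d,x,y}p_{D,X,Y}(d,x,y)\,p_{\hat X,\hat Y|D,X,Y}(\hat x,\hat y|d,x,y)$ and $p_{\hat Y|D}(\hat y|d)=\sum_{\hat x}\sum_{x,y}p_{X,Y|D}(x,y|d)\,p_{\hat X,\hat Y|D,X,Y}(\hat x,\hat y|d,x,y)$. Then this problem is a convex (respectively quasiconvex) optimization problem if $\Delta(\cdot,\cdot)$ is convex (respectively quasiconvex) in its first argument with the second fixed and $J(\cdot,\cdot)$ is quasiconvex in its first argument with the second fixed. If constraint (i) is replaced by $J\big(p_{\hat Y|D}(y|d_1),p_{\hat Y|D}(y|d_2)\big)\le\epsilon_{y,d_1,d_2}$ for all $d_1,d_2\in\mathcal{D}$, $y\in\{0,1\}$, then the same conclusion holds provided $\Delta$ is (quasi)convex in its first argument and $J$ is jointly quasiconvex in both arguments.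
   Context: $D$ denotes discriminatory (protected) variables, $X$ other features, $Y$ a binary outcome; $(\hat X,\hat Y)$ is the transformed data obtained by applying the randomized mapping $p_{\hat X,\hat Y|X,Y,D}$ to $(D,X,Y)\sim p_{D,X,Y}$, with $D$ retained unchanged. *)

theory Defs
  imports "HOL-Analysis.Analysis"
begin

text \<open>Convex combinations of real-valued functions (pointwise), used to express
convexity of sets of (conditional) distributions viewed as real vectors indexed by
a finite set.\<close>

definition fmix :: "real \<Rightarrow> ('a \<Rightarrow> real) \<Rightarrow> ('a \<Rightarrow> real) \<Rightarrow> ('a \<Rightarrow> real)" where
  "fmix t f g = (\<lambda>z. t * f z + (1 - t) * g z)"

definition fconvex :: "('a \<Rightarrow> real) set \<Rightarrow> bool" where
  "fconvex S \<longleftrightarrow> (\<forall>f\<in>S. \<forall>g\<in>S. \<forall>t. 0 \<le> t \<and> t \<le> 1 \<longrightarrow> fmix t f g \<in> S)"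

definition fconvex_on :: "('a \<Rightarrow> real) set \<Rightarrow> (('a \<Rightarrow> real) \<Rightarrow> real) \<Rightarrow> bool" where
  "fconvex_on S F \<longleftrightarrow> (\<forall>f\<in>S. \<forall>g\<in>S. \<forall>t. 0 \<le> t \<and> t \<le> 1 \<longrightarrow>
      F (fmix t f g) \<le> t * F f + (1 - t) * F g)"

definition fquasiconvex_on :: "('a \<Rightarrow> real) set \<Rightarrow> (('a \<Rightarrow> real) \<Rightarrow> real) \<Rightarrow> bool" where
  "fquasiconvex_on S F \<longleftrightarrow> (\<forall>f\<in>S. \<forall>g\<in>S. \<forall>t. 0 \<le> t \<and> t \<le> 1 \<longrightarrow>
      F (fmix t f g) \<le> max (F f) (F g))"

definition quasiconvex_on :: "'a::real_vector set \<Rightarrow> ('a \<Rightarrow> real) \<Rightarrow> bool" where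
  "quasiconvex_on S f \<longleftrightarrow> (\<forall>x\<in>S. \<forall>y\<in>S. \<forall>t. 0 \<le> t \<and> t \<le> 1 \<longrightarrow>
      f (t *\<^sub>R x + (1 - t) *\<^sub>R y) \<le> max (f x) (f y))"

definition convex_problem :: "('a \<Rightarrow> real) set \<Rightarrow> (('a \<Rightarrow> real) \<Rightarrow> real) \<Rightarrow> bool" where
  "convex_problem S F \<longleftrightarrow> fconvex S \<and> fconvex_on S F"

definition quasiconvex_problem :: "('a \<Rightarrow> real) set \<Rightarrow> (('a \<Rightarrow> real) \<Rightarrow> real) \<Rightarrow> bool" where
  "quasiconvex_problem S F \<longleftrightarrow> fconvex S \<and> fquasiconvex_on S F"

definition is_pmf :: "('a::finite \<Rightarrow> real) \<Rightarrow> bool" where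
  "is_pmf p \<longleftrightarrow> (\<forall>z. 0 \<le> p z) \<and> (\<Sum>z\<in>UNIV. p z) = 1"

text \<open>Data model: p is the joint pmf of (D,X,Y); a mapping Q gives
Q ((d,x,y),(xh,yh)) = p_{Xhat,Yhat|D,X,Y}(xh,yh|d,x,y).\<close>

type_synonym ('d,'x) mapping = "('d \<times> 'x \<times> bool) \<times> ('x \<times> bool) \<Rightarrow> real"

definition pD :: "('d::finite \<times> 'x::finite \<times> bool \<Rightarrow> real) \<Rightarrow> 'd \<Rightarrow> real" where
  "pD p d = (\<Sum>x\<in>UNIV. \<Sum>y\<in>UNIV. p (d, x, y))"

definition pXY :: "('d::finite \<times> 'x::finite \<times> bool \<Rightarrow> real) \<Rightarrow> ('x \<times> bool) \<Rightarrow> real" where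
  "pXY p = (\<lambda>(x, y). \<Sum>d\<in>UNIV. p (d, x, y))"

text \<open>Conditional p_{X,Y|D}(x,y|d) (set to 0 when p_D(d) = 0, by division by zero).\<close>

definition pXY_given_D :: "('d::finite \<times> 'x::finite \<times> bool \<Rightarrow> real) \<Rightarrow> 'd \<Rightarrow> 'x \<Rightarrow> bool \<Rightarrow> real" where
  "pXY_given_D p d x y = p (d, x, y) / pD p d"

definition valid_mapping :: "('d::finite, 'x::finite) mapping \<Rightarrow> bool" where
  "valid_mapping Q \<longleftrightarrow> (\<forall>z. \<forall>w. 0 \<le> Q (z, w)) \<and> (\<forall>z. (\<Sum>w\<in>UNIV. Q (z, w)) = 1)"

definition pXYhat :: "('d::finite \<times> 'x::finite \<times> bool \<Rightarrow> real) \<Rightarrow> ('d, 'x) mapping \<Rightarrow> ('x \<times> bool) \<Rightarrow> real" where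
  "pXYhat p Q = (\<lambda>w. \<Sum>z\<in>UNIV. p z * Q (z, w))"

definition pYhat_given_D :: "('d::finite \<times> 'x::finite \<times> bool \<Rightarrow> real) \<Rightarrow> ('d, 'x) mapping \<Rightarrow> bool \<Rightarrow> 'd \<Rightarrow> real" where
  "pYhat_given_D p Q yh d =
     (\<Sum>xh\<in>UNIV. \<Sum>x\<in>UNIV. \<Sum>y\<in>UNIV. pXY_given_D p d x y * Q ((d, x, y), (xh, yh)))"

definition distortion_ok :: "('x::finite \<times> bool \<Rightarrow> 'x \<times> bool \<Rightarrow> real) \<Rightarrow> ('d::finite \<times> 'x \<times> bool \<Rightarrow> real)
     \<Rightarrow> ('d, 'x) mapping \<Rightarrow> bool" where
  "distortion_ok \<delta> c Q \<longleftrightarrow>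
     (\<forall>d x y. (\<Sum>w\<in>UNIV. Q ((d, x, y), w) * \<delta> (x, y) w) \<le> c (d, x, y))"

definition feasible1 where
  "feasible1 p pYT J eps \<delta> c =
     {Q. (\<forall>d y. J (pYhat_given_D p Q y d) (pYT y) \<le> eps y d)
         \<and> distortion_ok \<delta> c Q \<and> valid_mapping Q}"

definition feasible2 where
  "feasible2 p J eps2 \<delta> c =
     {Q. (\<forall>d1 d2 y. J (pYhat_given_D p Q y d1) (pYhat_given_D p Q y d2) \<le> eps2 y d1 d2)
         \<and> distortion_ok \<delta> c Q \<and> valid_mapping Q}"

end

theory Submission
  imports Defs
begin


lemma pmf_nonneg: "is_pmf p \<Longrightarrow> 0 \<le> p z" by (simp add: is_pmf_def)

lemma sum_UNIV_pair: "(\<Sum>w\<in>(UNIV::('a::finite \<times> 'b::finite) set). f w) = (\<Sum>a\<in>UNIV. \<Sum>b\<in>UNIV. f (a, b))"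
proof -
  have "(\<Sum>a\<in>UNIV. \<Sum>b\<in>UNIV. f (a,b)) = (\<Sum>(a,b)\<in>UNIV\<times>UNIV. f (a,b))" by (rule sum.cartesian_product)
  then show ?thesis by (simp add: UNIV_Times_UNIV)
qed

lemma mixl: "a * (t*x + (1-t)*y) = t*(a*x) + (1-t)*(a*(y::real))" by (simp add: algebra_simps)
lemma mixr: "(t*x + (1-t)*y) * a = t*(x*a) + (1-t)*(y*(a::real))" by (simp add: algebra_simps)

lemma valid_mix:
  assumes "valid_mapping Q1" "valid_mapping Q2" "0 \<le> t" "t \<le> 1"
  shows "valid_mapping (fmix t Q1 Q2)"
  using assms unfolding valid_mapping_def fmix_def
  by (simp add: sum.distrib sum_distrib_left[symmetric])

lemma dist_mix:
  assumes "distortion_ok \<delta> c Q1" "distortion_ok \<delta> c Q2" "0 \<le> t" "t \<le> 1"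
  shows "distortion_ok \<delta> c (fmix t Q1 Q2)"
  unfolding distortion_ok_def
proof (intro allI)
  fix d x y
  have "(\<Sum>w\<in>UNIV. fmix t Q1 Q2 ((d, x, y), w) * \<delta> (x, y) w)
     = t * (\<Sum>w\<in>UNIV. Q1 ((d, x, y), w) * \<delta> (x, y) w) + (1 - t) * (\<Sum>w\<in>UNIV. Q2 ((d, x, y), w) * \<delta> (x, y) w)"
    by (simp add: fmix_def mixr sum.distrib sum_distrib_left)
  also have "\<dots> \<le> t * c (d,x,y) + (1 - t) * c (d,x,y)"
    using assms unfolding distortion_ok_def
    by (intro add_mono mult_left_mono) auto
  finally show "(\<Sum>w\<in>UNIV. fmix t Q1 Q2 ((d, x, y), w) * \<delta> (x, y) w) \<le> c (d, x, y)"
    by (simp add: algebra_simps)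
qed

lemma pYhat_mix:
  "pYhat_given_D p (fmix t Q1 Q2) yh d = t * pYhat_given_D p Q1 yh d + (1 - t) * pYhat_given_D p Q2 yh d"
  by (simp add: pYhat_given_D_def fmix_def mixl sum.distrib sum_distrib_left)

lemma pXYhat_mix:
  "pXYhat p (fmix t Q1 Q2) = fmix t (pXYhat p Q1) (pXYhat p Q2)"
  by (rule ext) (simp add: pXYhat_def fmix_def mixl sum.distrib sum_distrib_left)

lemma pXYhat_pmf:
  assumes "is_pmf p" "valid_mapping Q"
  shows "is_pmf (pXYhat p Q)"
  unfolding is_pmf_def
proof
  show "\<forall>z. 0 \<le> pXYhat p Q z"
    using assms by (auto simp: pXYhat_def valid_mapping_def is_pmf_def intro!: sum_nonneg)
  have "(\<Sum>w\<in>UNIV. pXYhat p Q w) = (\<Sum>z\<in>UNIV. p z * (\<Sum>w\<in>UNIV. Q (z, w)))"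
    unfolding pXYhat_def sum_distrib_left by (rule sum.swap)
  also have "\<dots> = (\<Sum>z\<in>UNIV. p z)"
  proof -
    have "\<forall>z. (\<Sum>w\<in>UNIV. Q (z, w)) = 1" using assms(2) unfolding valid_mapping_def by blast
    then show ?thesis by (intro sum.cong refl) (simp only: mult_1_right)
  qed
  also have "\<dots> = 1" using assms by (simp add: is_pmf_def)
  finally show "(\<Sum>w\<in>UNIV. pXYhat p Q w) = 1" .
qed

lemma pXY_pmf:
  assumes "is_pmf (p :: 'd::finite \<times> 'x::finite \<times> bool \<Rightarrow> real)"
  shows "is_pmf (pXY p)"
  unfolding is_pmf_def
proof
  show "\<forall>z. 0 \<le> pXY p z"
    using assms by (auto simp: pXY_def is_pmf_def intro!: sum_nonneg)
  have "(\<Sum>w\<in>UNIV. pXY p w) = (\<Sum>x\<in>UNIV. \<Sum>y\<in>UNIV. \<Sum>d\<in>UNIV. p (d, x, y))"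
    by (simp add: sum_UNIV_pair pXY_def)
  also have "\<dots> = (\<Sum>x\<in>UNIV. \<Sum>d\<in>UNIV. \<Sum>y\<in>UNIV. p (d, x, y))"
    by (rule sum.cong[OF refl], rule sum.swap)
  also have "\<dots> = (\<Sum>d\<in>UNIV. \<Sum>x\<in>UNIV. \<Sum>y\<in>UNIV. p (d, x, y))"
    by (rule sum.swap)
  also have "\<dots> = (\<Sum>z\<in>UNIV. p z)"
    by (simp add: sum_UNIV_pair)
  also have "\<dots> = 1" using assms by (simp add: is_pmf_def)
  finally show "(\<Sum>w\<in>UNIV. pXY p w) = 1" .
qed

lemma pYhat_range:
  assumes "is_pmf p" "valid_mapping Q"
  shows "pYhat_given_D p Q yh d \<in> {0..1}"
proof -
  have pD0: "0 \<le> pD p d" using assms by (auto simp: pD_def is_pmf_def intro!: sum_nonneg)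
  have g0: "0 \<le> pXY_given_D p d x y" for x y
    using assms pD0 by (auto simp: pXY_given_D_def is_pmf_def)
  have nn: "0 \<le> pYhat_given_D p Q yh d"
    using assms g0 by (auto simp: pYhat_given_D_def valid_mapping_def intro!: sum_nonneg mult_nonneg_nonneg)
  have "pYhat_given_D p Q yh d = (\<Sum>x\<in>UNIV. \<Sum>y\<in>UNIV. pXY_given_D p d x y * (\<Sum>xh\<in>UNIV. Q ((d, x, y), (xh, yh))))"
  proof -
    have "pYhat_given_D p Q yh d = (\<Sum>x\<in>UNIV. \<Sum>xh\<in>UNIV. \<Sum>y\<in>UNIV. pXY_given_D p d x y * Q ((d, x, y), (xh, yh)))"
      unfolding pYhat_given_D_def by (rule sum.swap)
    also have "\<dots> = (\<Sum>x\<in>UNIV. \<Sum>y\<in>UNIV. \<Sum>xh\<in>UNIV. pXY_given_D p d x y * Q ((d, x, y), (xh, yh)))"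
      by (rule sum.cong[OF refl], rule sum.swap)
    finally show ?thesis by (simp only: sum_distrib_left)
  qed
  also have "\<dots> \<le> (\<Sum>x\<in>UNIV. \<Sum>y\<in>UNIV. pXY_given_D p d x y * 1)"
  proof (intro sum_mono mult_left_mono g0)
    fix x y
    have "(\<Sum>xh\<in>UNIV. Q ((d, x, y), (xh, yh))) \<le> (\<Sum>xh\<in>UNIV. \<Sum>b\<in>UNIV. Q ((d, x, y), (xh, b)))"
      using assms(2) by (intro sum_mono member_le_sum) (auto simp: valid_mapping_def)
    also have "\<dots> = (\<Sum>w\<in>UNIV. Q ((d, x, y), w))" by (simp only: sum_UNIV_pair)
    also have "\<dots> = 1" using assms(2) unfolding valid_mapping_def by blast
    finally show "(\<Sum>xh\<in>UNIV. Q ((d, x, y), (xh, yh))) \<le> 1" .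
  qed
  also have "\<dots> = (\<Sum>x\<in>UNIV. \<Sum>y\<in>UNIV. p (d, x, y)) / pD p d"
    by (simp add: pXY_given_D_def sum_divide_distrib)
  also have "\<dots> \<le> 1" by (simp add: pD_def[symmetric])
  finally show ?thesis using nn by simp
qed

theorem proposition1:
  fixes p :: "'d::finite \<times> 'x::finite \<times> bool \<Rightarrow> real"
    and pYT :: "bool \<Rightarrow> real"
    and \<delta> :: "'x \<times> bool \<Rightarrow> 'x \<times> bool \<Rightarrow> real"
    and eps :: "bool \<Rightarrow> 'd \<Rightarrow> real"
    and eps2 :: "bool \<Rightarrow> 'd \<Rightarrow> 'd \<Rightarrow> real"
    and c :: "'d \<times> 'x \<times> bool \<Rightarrow> real"
    and \<Delta> :: "('x \<times> bool \<Rightarrow> real) \<Rightarrow> ('x \<times> bool \<Rightarrow> real) \<Rightarrow> real"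
    and J :: "real \<Rightarrow> real \<Rightarrow> real"
  assumes p_pmf: "is_pmf p"
    and pYT_pmf: "is_pmf pYT"
    and \<delta>_nonneg: "\<forall>a b. 0 \<le> \<delta> a b"
    and \<delta>_refl: "\<forall>a. \<delta> a a = 0"
  shows
    "((\<forall>\<nu>. is_pmf \<nu> \<longrightarrow> fconvex_on {\<mu>. is_pmf \<mu>} (\<lambda>\<mu>. \<Delta> \<mu> \<nu>))
        \<and> (\<forall>b. quasiconvex_on {0..1} (\<lambda>a. J a b))
      \<longrightarrow> convex_problem (feasible1 p pYT J eps \<delta> c) (\<lambda>Q. \<Delta> (pXYhat p Q) (pXY p)))
   \<and> ((\<forall>\<nu>. is_pmf \<nu> \<longrightarrow> fquasiconvex_on {\<mu>. is_pmf \<mu>} (\<lambda>\<mu>. \<Delta> \<mu> \<nu>))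
        \<and> (\<forall>b. quasiconvex_on {0..1} (\<lambda>a. J a b))
      \<longrightarrow> quasiconvex_problem (feasible1 p pYT J eps \<delta> c) (\<lambda>Q. \<Delta> (pXYhat p Q) (pXY p)))
   \<and> ((\<forall>\<nu>. is_pmf \<nu> \<longrightarrow> fconvex_on {\<mu>. is_pmf \<mu>} (\<lambda>\<mu>. \<Delta> \<mu> \<nu>))
        \<and> quasiconvex_on ({0..1} \<times> {0..1}) (\<lambda>(a, b). J a b)
      \<longrightarrow> convex_problem (feasible2 p J eps2 \<delta> c) (\<lambda>Q. \<Delta> (pXYhat p Q) (pXY p)))
   \<and> ((\<forall>\<nu>. is_pmf \<nu> \<longrightarrow> fquasiconvex_on {\<mu>. is_pmf \<mu>} (\<lambda>\<mu>. \<Delta> \<mu> \<nu>))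
        \<and> quasiconvex_on ({0..1} \<times> {0..1}) (\<lambda>(a, b). J a b)
      \<longrightarrow> quasiconvex_problem (feasible2 p J eps2 \<delta> c) (\<lambda>Q. \<Delta> (pXYhat p Q) (pXY p)))"
  
proof -
  have vm: "\<And>Q. Q \<in> feasible1 p pYT J eps \<delta> c \<Longrightarrow> valid_mapping Q"
    "\<And>Q. Q \<in> feasible2 p J eps2 \<delta> c \<Longrightarrow> valid_mapping Q"
    by (auto simp: feasible1_def feasible2_def)
  have pm: "\<And>Q. valid_mapping Q \<Longrightarrow> pXYhat p Q \<in> {\<mu>. is_pmf \<mu>}"
    using pXYhat_pmf p_pmf by blast
  have nu: "is_pmf (pXY p)" using pXY_pmf p_pmf by blast
  have F1: "fconvex (feasible1 p pYT J eps \<delta> c)" if J1: "\<forall>b. quasiconvex_on {0..1} (\<lambda>a. J a b)"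
    unfolding fconvex_def
  proof (intro ballI allI impI)
    fix f g and t :: real
    assume f: "f \<in> feasible1 p pYT J eps \<delta> c" and g: "g \<in> feasible1 p pYT J eps \<delta> c" and t: "0 \<le> t \<and> t \<le> 1"
    have "J (pYhat_given_D p (fmix t f g) y d) (pYT y) \<le> eps y d" for y d
    proof -
      have "J (pYhat_given_D p (fmix t f g) y d) (pYT y)
          \<le> max (J (pYhat_given_D p f y d) (pYT y)) (J (pYhat_given_D p g y d) (pYT y))"
        using spec[OF J1, of "pYT y", unfolded quasiconvex_on_def, rule_format,
            of "pYhat_given_D p f y d" "pYhat_given_D p g y d" t]
          t pYhat_range[OF p_pmf vm(1)[OF f]] pYhat_range[OF p_pmf vm(1)[OF g]]
        unfolding pYhat_mix by simp
      also have "\<dots> \<le> eps y d" using f g by (simp add: feasible1_def)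
      finally show ?thesis .
    qed
    moreover have "distortion_ok \<delta> c (fmix t f g)" using f g t by (intro dist_mix) (auto simp: feasible1_def)
    moreover have "valid_mapping (fmix t f g)" using f g t by (intro valid_mix) (auto simp: feasible1_def)
    ultimately show "fmix t f g \<in> feasible1 p pYT J eps \<delta> c"
      by (simp add: feasible1_def)
  qed
  have F2: "fconvex (feasible2 p J eps2 \<delta> c)" if J2: "quasiconvex_on ({0..1} \<times> {0..1}) (\<lambda>(a, b). J a b)"
    unfolding fconvex_def
  proof (intro ballI allI impI)
    fix f g and t :: real
    assume f: "f \<in> feasible2 p J eps2 \<delta> c" and g: "g \<in> feasible2 p J eps2 \<delta> c" and t: "0 \<le> t \<and> t \<le> 1"
    have "J (pYhat_given_D p (fmix t f g) y d1) (pYhat_given_D p (fmix t f g) y d2) \<le> eps2 y d1 d2" for y d1 d2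
    proof -
      have "J (pYhat_given_D p (fmix t f g) y d1) (pYhat_given_D p (fmix t f g) y d2)
          \<le> max (J (pYhat_given_D p f y d1) (pYhat_given_D p f y d2)) (J (pYhat_given_D p g y d1) (pYhat_given_D p g y d2))"
        using J2[unfolded quasiconvex_on_def, rule_format,
            of "(pYhat_given_D p f y d1, pYhat_given_D p f y d2)" "(pYhat_given_D p g y d1, pYhat_given_D p g y d2)" t]
          t pYhat_range[OF p_pmf vm(2)[OF f]] pYhat_range[OF p_pmf vm(2)[OF g]]
        unfolding pYhat_mix by simp
      also have "\<dots> \<le> eps2 y d1 d2" using f g by (simp add: feasible2_def)
      finally show ?thesis .
    qed
    moreover have "distortion_ok \<delta> c (fmix t f g)" using f g t by (intro dist_mix) (auto simp: feasible2_def)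
    moreover have "valid_mapping (fmix t f g)" using f g t by (intro valid_mix) (auto simp: feasible2_def)
    ultimately show "fmix t f g \<in> feasible2 p J eps2 \<delta> c"
      by (simp add: feasible2_def)
  qed
  have O1: "fconvex_on S (\<lambda>Q. \<Delta> (pXYhat p Q) (pXY p))"
    if "\<forall>\<nu>. is_pmf \<nu> \<longrightarrow> fconvex_on {\<mu>. is_pmf \<mu>} (\<lambda>\<mu>. \<Delta> \<mu> \<nu>)" "\<And>Q. Q \<in> S \<Longrightarrow> valid_mapping Q" for S
    unfolding fconvex_on_def pXYhat_mix
  proof (intro ballI allI impI)
    fix f g and t :: real assume "f \<in> S" "g \<in> S" "0 \<le> t \<and> t \<le> 1"
    then show "\<Delta> (fmix t (pXYhat p f) (pXYhat p g)) (pXY p) \<le> t * \<Delta> (pXYhat p f) (pXY p) + (1 - t) * \<Delta> (pXYhat p g) (pXY p)"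
      using that(1)[rule_format, OF nu, unfolded fconvex_on_def] pm[OF that(2)] by blast
  qed
  have O2: "fquasiconvex_on S (\<lambda>Q. \<Delta> (pXYhat p Q) (pXY p))"
    if "\<forall>\<nu>. is_pmf \<nu> \<longrightarrow> fquasiconvex_on {\<mu>. is_pmf \<mu>} (\<lambda>\<mu>. \<Delta> \<mu> \<nu>)" "\<And>Q. Q \<in> S \<Longrightarrow> valid_mapping Q" for S
    unfolding fquasiconvex_on_def pXYhat_mix
  proof (intro ballI allI impI)
    fix f g and t :: real assume "f \<in> S" "g \<in> S" "0 \<le> t \<and> t \<le> 1"
    then show "\<Delta> (fmix t (pXYhat p f) (pXYhat p g)) (pXY p) \<le> max (\<Delta> (pXYhat p f) (pXY p)) (\<Delta> (pXYhat p g) (pXY p))"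
      using that(1)[rule_format, OF nu, unfolded fquasiconvex_on_def] pm[OF that(2)] by blast
  qed
  show ?thesis
    unfolding convex_problem_def quasiconvex_problem_def
    by (intro conjI impI; elim conjE; intro conjI F1 F2 O1 O2; assumption?; erule vm)
qed

end
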